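(* Let $(X^n,d,\mu)$ be a compact metric measure space satisfying the $n$-dimensional condition with ${\rm Sc}^{{\rm vol}_n}(X^n)\geq\kappa\geq 0$ and SC-radius $r_{X^n}$, and suppose a tangent space $(Y^n,d_Y,\mu_Y,o)$ of $X^n$ exists at a point $p\in X^n$. Then $(Y^n,d_Y,\mu_Y,o)$ satisfies ${\rm Sc}^{{\rm vol}_n}(Y^n)\geq 0$ with SC-radius $\geq r_{X^n}$, i.e. $\mu_Y(B_\epsilon(y))\leq{\rm vol}_E(B_\epsilon(\mathbf{R}^n))$ for all $y\in Y^n$ and all $0<\epsilon\leq r_{X^n}$.
   Context: A metric measure space (mm-space) $(X,d,\mu)$ consists of a complete separable length metric $d$ and a locally finite full-support Borel measure $\mu$. $B_r(x)$ is the closed $r$-ball and ${\rm vol}_E(B_r(\mathbf{R}^n))$ the Euclidean volume of a closed $r$-ball in $\mathbf{R}^n$. $n$-dimensional condition: $\lim_{r\to 0}\mu(B_r(x))/{\rm vol}_E(B_r(\mathbf{R}^n))=1$ for all $x$. For $\gamma>0$, $S^2(\gamma)$ is the round 2-sphere of scalar curvature $2\gamma^{-2}$; $S^2(\gamma)\times\mathbf{R}^{n-2}$ has the product metric $\sqrt{d_S^2+d_E^2}$ and product volume, whose $\epsilon$-balls have volume ${\rm vol}_{S\times E}(B_\epsilon(S^2(\gamma)\times\mathbf{R}^{n-2}))$. For a compact mm-space $X$ with the $n$-dimensional condition: ${\rm Sc}^{{\rm vol}_n}(X)\geq 0$ with SC-radius $r_X>0$ means $\mu(B_\epsilon(x))\leq{\rm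 vol}_E(B_\epsilon(\mathbf{R}^n))$ for all $x$ and $0<\epsilon\leq r_X$; for $\kappa>0$, ${\rm Sc}^{{\rm vol}_n}(X)\geq\kappa$ means for every $\gamma>\sqrt{2/\kappa}$ there is $r_{X,\gamma}>0$ with $\mu(B_\epsilon(x))<{\rm vol}_{S\times E}(B_\epsilon(S^2(\gamma)\times\mathbf{R}^{n-2}))$ for all $x$ and $0<\epsilon\leq r_{X,\gamma}$, and the SC-radius is $r_X:=\inf_\gamma r_{X,\gamma}$. A map $f$ between metric spaces is an $\epsilon$-isometry if it distorts distances by at most $\epsilon$ and its image is $\epsilon$-dense. Borel measures converge strongly if they converge on every Borel set. Pointed locally compact mm-spaces $(X_i,d_i,\mu_i,p_i)$ converge to $(X,d,\mu,p)$ in the pointed strongly measured Gromov--Hausdorff topology if there are $r_i\to\infty$, $\epsilon_i\to 0$ and measurable pointed $\epsilon_i$-isometries $f_i\colon B_{r_i}(p_i)\to B_{r_i}(p)$ with $(f_i)_*\mu_i\to\mu$ strongly. A pointed mm-space $(Y,d_Y,\mu_Y,o)$ is a tangent space of $(X^n,d,\mu)$ at $p$ if there is a sequence $\lambda_i\to\infty$ such that $(X^n,\lambda_i d,\lambda_i^n\mu,p)$ converges to $(Y,d_Y,\mu_Y,o)$ in this pointed strongly measured Gromov--Hausdorff sense. *)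

theory Defs
  imports "HOL-Analysis.Analysis"
begin

text \<open>Metric measure spaces are modelled on a type: the carrier is UNIV of a type
  of class metric_space, the metric is dist, and the measure is a measure on the
  Borel sets of that type.\<close>

definition curve_length :: "(real \<Rightarrow> 'a::metric_space) \<Rightarrow> ereal" where
  "curve_length g = (SUP ts \<in> {ts. sorted ts \<and> set ts \<subseteq> {0..1}}.
      ereal (\<Sum>i < length ts - 1. dist (g (ts ! i)) (g (ts ! Suc i))))"

definition length_metric_space :: "'a::metric_space itself \<Rightarrow> bool" where
  "length_metric_space _ \<longleftrightarrow>
     (\<forall>x y::'a. \<forall>e>0. \<exists>g. continuous_on {0..1} g \<and> g 0 = x \<and> g 1 = y \<and>
          curve_length g \<le> ereal (dist x y + e))"

definition mm_space :: "'a::metric_space measure \<Rightarrow> bool" where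
  "mm_space \<mu> \<longleftrightarrow>
     complete (UNIV :: 'a set) \<and>
     (\<exists>D::'a set. countable D \<and> closure D = UNIV) \<and>
     length_metric_space TYPE('a) \<and>
     sets \<mu> = sets borel \<and>
     (\<forall>x. \<exists>U. open U \<and> x \<in> U \<and> emeasure \<mu> U < \<infinity>) \<and>
     (\<forall>U. open U \<and> U \<noteq> {} \<longrightarrow> emeasure \<mu> U > 0)"

definition vol_E :: "nat \<Rightarrow> real \<Rightarrow> real" where
  "vol_E n r = unit_ball_vol (real n) * r ^ n"

text \<open>Volume of a closed eps-ball in S^2(gamma) x R^(n-2) with product metric and
  product volume. By homogeneity we centre the ball at (north pole, 0); in spherical
  coordinates (theta, phi) on S^2(gamma) the area element is gamma^2 sin theta, the
  geodesic distance to the north pole is gamma*theta, and the fibre over such a point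
  is a Euclidean (n-2)-ball of radius sqrt(eps^2 - (gamma theta)^2).
  Integrating out phi gives the factor 2 pi.\<close>
definition vol_SE :: "nat \<Rightarrow> real \<Rightarrow> real \<Rightarrow> real" where
  "vol_SE n \<gamma> \<epsilon> = 2 * pi * \<gamma>\<^sup>2 *
     integral {0 .. min pi (\<epsilon> / \<gamma>)}
       (\<lambda>\<theta>. sin \<theta> * vol_E (n - 2) (sqrt (\<epsilon>\<^sup>2 - (\<gamma> * \<theta>)\<^sup>2)))"

definition n_dimensional :: "nat \<Rightarrow> 'a::metric_space measure \<Rightarrow> bool" where
  "n_dimensional n \<mu> \<longleftrightarrow>
     (\<forall>x. ((\<lambda>r. measure \<mu> (cball x r) / vol_E n r) \<longlongrightarrow> 1) (at_right 0))"

text \<open>Sc^{vol_n}(X) \<ge> kappa (kappa \<ge> 0) with SC-radius rX.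
  For kappa > 0 the radii r_{X,gamma} are some admissible choice and rX is their infimum.\<close>
definition Sc_vol_ge :: "nat \<Rightarrow> 'a::metric_space measure \<Rightarrow> real \<Rightarrow> real \<Rightarrow> bool" where
  "Sc_vol_ge n \<mu> \<kappa> rX \<longleftrightarrow>
     (if \<kappa> = 0 then
        rX > 0 \<and> (\<forall>x \<epsilon>. 0 < \<epsilon> \<and> \<epsilon> \<le> rX \<longrightarrow> emeasure \<mu> (cball x \<epsilon>) \<le> ennreal (vol_E n \<epsilon>))
      else
        (\<exists>rg :: real \<Rightarrow> real.
           (\<forall>\<gamma>. \<gamma> > sqrt (2 / \<kappa>) \<longrightarrow> rg \<gamma> > 0 \<and>
              (\<forall>x \<epsilon>. 0 < \<epsilon> \<and> \<epsilon> \<le> rg \<gamma> \<longrightarrow>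
                  emeasure \<mu> (cball x \<epsilon>) < ennreal (vol_SE n \<gamma> \<epsilon>))) \<and>
           rX = (INF \<gamma> \<in> {sqrt (2 / \<kappa>)<..}. rg \<gamma>)))"

text \<open>(X, lam*d, lam^n*mu, p) for a sequence lam: pointed strongly measured GH convergence
  to (Y, dY, muY, q).  The rescaled r-ball around p is the original (r/lam)-ball.\<close>
definition tangent_space_at ::
  "nat \<Rightarrow> 'a::metric_space measure \<Rightarrow> 'a \<Rightarrow> 'b::metric_space measure \<Rightarrow> 'b \<Rightarrow> bool" where
  "tangent_space_at n \<mu> p \<mu>Y q \<longleftrightarrow>
     mm_space \<mu>Y \<and> locally compact (UNIV :: 'b set) \<and>
     (\<exists>lam :: nat \<Rightarrow> real. filterlim lam at_top sequentially \<and> (\<forall>i. lam i > 0) \<and>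
       (\<exists>(r :: nat \<Rightarrow> real) (e :: nat \<Rightarrow> real) (f :: nat \<Rightarrow> 'a \<Rightarrow> 'b).
          filterlim r at_top sequentially \<and> e \<longlonglongrightarrow> 0 \<and>
          (\<forall>i. let D = cball p (r i / lam i) in
               f i \<in> measurable (restrict_space borel D) borel \<and>
               f i p = q \<and>
               f i ` D \<subseteq> cball q (r i) \<and>
               (\<forall>x\<in>D. \<forall>y\<in>D. \<bar>dist (f i x) (f i y) - lam i * dist x y\<bar> \<le> e i) \<and>
               (\<forall>z\<in>cball q (r i). \<exists>x\<in>D. dist (f i x) z \<le> e i)) \<and>
          (\<forall>A \<in> sets borel.
             (\<lambda>i. emeasure (distr (restrict_space (scale_measure (ennreal (lam i ^ n)) \<mu>)
                                    (cball p (r i / lam i))) borel (f i)) A)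
             \<longlonglongrightarrow> emeasure \<mu>Y A)))"

end

theory Submission
  imports Defs
begin

lemma ubv_rec: "unit_ball_vol (real m + 2) = 2 * pi / (real m + 2) * unit_ball_vol (real m)"
proof -
  have g: "Gamma ((real m + 2) / 2 + 1) = ((real m)/2 + 1) * Gamma (real m / 2 + 1)"
  proof -
    have "real m / 2 + 1 \<notin> \<int>\<^sub>\<le>\<^sub>0" proof
      assume "real m / 2 + 1 \<in> \<int>\<^sub>\<le>\<^sub>0"
      then have "real m / 2 + 1 \<le> 0" by (rule nonpos_Ints_nonpos)
      moreover have "real m / 2 \<ge> 0" by simp
      ultimately show False by linarith
    qed
    then show ?thesis using Gamma_plus1[of "real m / 2 + 1"] by (simp add: field_simps)
  qed
  have p: "pi powr ((real m + 2) / 2) = pi * pi powr (real m / 2)"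
    using powr_add[of pi "real m / 2" 1] by (simp add: add_divide_distrib)
  have "Gamma (real m / 2 + 1) \<noteq> 0"
    using Gamma_real_pos[of "real m / 2 + 1"]
    by (metis add_pos_nonneg divide_nonneg_pos of_nat_0_le_iff order_less_irrefl zero_less_numeral zero_less_one add.commute)
  then show ?thesis unfolding unit_ball_vol_def g p by (simp add: field_simps)
qed

lemma ftc_part:
  fixes m :: nat and \<gamma> \<rho> a :: real
  assumes "\<gamma> > 0" "\<rho> > 0" "0 \<le> a" "a \<le> \<rho> / \<gamma>"
  shows "((\<lambda>\<theta>. \<theta> * sqrt (\<rho>\<^sup>2 - (\<gamma> * \<theta>)\<^sup>2) ^ m) has_integral
     (sqrt (\<rho>\<^sup>2 - (\<gamma> * a)\<^sup>2) ^ (m+2) - sqrt (\<rho>\<^sup>2 - (\<gamma> * 0)\<^sup>2) ^ (m+2)) / (- (real m + 2) * \<gamma>\<^sup>2)) {0..a}"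
proof -
  let ?G = "\<lambda>\<theta>. sqrt (\<rho>\<^sup>2 - (\<gamma> * \<theta>)\<^sup>2) ^ (m+2) / (- (real m + 2) * \<gamma>\<^sup>2)"
  have "((\<lambda>\<theta>. \<theta> * sqrt (\<rho>\<^sup>2 - (\<gamma> * \<theta>)\<^sup>2) ^ m) has_integral ?G a - ?G 0) {0..a}"
  proof (rule fundamental_theorem_of_calculus_interior)
    show "0 \<le> a" by fact
    show "continuous_on {0..a} ?G" by (intro continuous_intros) (use assms in auto)
    show "(?G has_vector_derivative x * sqrt (\<rho>\<^sup>2 - (\<gamma> * x)\<^sup>2) ^ m) (at x)" if x: "x \<in> {0<..<a}" for x
    proof -
      have "\<gamma> * x < \<gamma> * a" using x assms by simp
      also have "\<dots> \<le> \<rho>" using assms by (simp add: field_simps)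
      finally have "\<gamma> * x < \<rho>" .
      moreover have "0 < \<gamma> * x" using x assms by simp
      ultimately have pos: "\<rho>\<^sup>2 - (\<gamma> * x)\<^sup>2 > 0"
        by (simp add: power_strict_mono)
      have s: "sqrt (\<rho>\<^sup>2 - (\<gamma> * x)\<^sup>2) > 0" using pos by simp
      let ?u = "\<lambda>x. \<rho>\<^sup>2 - (\<gamma> * x)\<^sup>2"
      have du: "(?u has_real_derivative (- 2 * \<gamma>\<^sup>2 * x)) (at x)"
        by (rule DERIV_cong, (rule derivative_intros)+) (simp add: power2_eq_square)
      have ds: "((\<lambda>x. sqrt (?u x)) has_real_derivative (inverse (sqrt (?u x)) / 2 * (- 2 * \<gamma>\<^sup>2 * x))) (at x)"
        using DERIV_chain2[OF DERIV_real_sqrt[OF pos] du] .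
      have dp: "((\<lambda>x. sqrt (?u x) ^ (m+2)) has_real_derivative
          (real (m+2) * (inverse (sqrt (?u x)) / 2 * (- 2 * \<gamma>\<^sup>2 * x) * sqrt (?u x) ^ (m+2 - Suc 0)))) (at x)"
        using DERIV_power[OF ds] .
      have dq: "(?G has_real_derivative
          (real (m+2) * (inverse (sqrt (?u x)) / 2 * (- 2 * \<gamma>\<^sup>2 * x) * sqrt (?u x) ^ (m+2 - Suc 0))) / (- (real m + 2) * \<gamma>\<^sup>2)) (at x)"
        using DERIV_cdivide[OF dp] .
      have eq: "(real (m+2) * (inverse (sqrt (?u x)) / 2 * (- 2 * \<gamma>\<^sup>2 * x) * sqrt (?u x) ^ (m+2 - Suc 0))) / (- (real m + 2) * \<gamma>\<^sup>2)
          = x * sqrt (?u x) ^ m"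
      proof -
        have "sqrt (?u x) ^ (m+2 - Suc 0) = sqrt (?u x) ^ m * sqrt (?u x)" by simp
        then have "(real (m+2) * (inverse (sqrt (?u x)) / 2 * (- 2 * \<gamma>\<^sup>2 * x) * sqrt (?u x) ^ (m+2 - Suc 0)))
           = (x * sqrt (?u x) ^ m) * (- (real m + 2) * \<gamma>\<^sup>2)" using s by (simp add: field_simps)
        moreover have "- (real m + 2) * \<gamma>\<^sup>2 \<noteq> 0" using assms by simp
        ultimately show ?thesis by simp
      qed
      show ?thesis using dq unfolding eq has_real_derivative_iff_has_vector_derivative .
    qed
  qed
  then show ?thesis by (simp add: diff_divide_distrib)
qed
lemma vol_SE_le:
  assumes g: "\<gamma> > 0" and r: "\<rho> > 0"
  shows "vol_SE n \<gamma> \<rho> \<le> 2 * pi * unit_ball_vol (real (n - 2)) * \<rho> ^ (n - 2 + 2) / (real (n - 2) + 2)"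
proof -
  define m where "m = n - 2"
  define a where "a = min pi (\<rho> / \<gamma>)"
  define c where "c = unit_ball_vol (real m)"
  have c0: "c \<ge> 0" unfolding c_def by simp
  have a0: "0 \<le> a" "a \<le> \<rho> / \<gamma>" unfolding a_def using g r by auto
  have ga: "(\<gamma> * a)\<^sup>2 \<le> \<rho>\<^sup>2"
  proof -
    have "\<gamma> * a \<le> \<rho>" using a0 g by (simp add: field_simps)
    then show ?thesis using a0 g by (intro power_mono) auto
  qed
  define I where "I = (sqrt (\<rho>\<^sup>2 - (\<gamma> * a)\<^sup>2) ^ (m+2) - sqrt (\<rho>\<^sup>2 - (\<gamma> * 0)\<^sup>2) ^ (m+2)) / (- (real m + 2) * \<gamma>\<^sup>2)"
  have hi: "((\<lambda>\<theta>. c * (\<theta> * sqrt (\<rho>\<^sup>2 - (\<gamma> * \<theta>)\<^sup>2) ^ m)) has_integral c * I) {0..a}"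
    unfolding I_def by (rule has_integral_mult_right, rule ftc_part) (use g r a0 in auto)
  have "integral {0..a} (\<lambda>\<theta>. sin \<theta> * vol_E m (sqrt (\<rho>\<^sup>2 - (\<gamma> * \<theta>)\<^sup>2)))
      \<le> integral {0..a} (\<lambda>\<theta>. c * (\<theta> * sqrt (\<rho>\<^sup>2 - (\<gamma> * \<theta>)\<^sup>2) ^ m))"
  proof (rule integral_le)
    show "(\<lambda>\<theta>. sin \<theta> * vol_E m (sqrt (\<rho>\<^sup>2 - (\<gamma> * \<theta>)\<^sup>2))) integrable_on {0..a}"
      unfolding vol_E_def by (intro integrable_continuous_interval continuous_intros)
    show "(\<lambda>\<theta>. c * (\<theta> * sqrt (\<rho>\<^sup>2 - (\<gamma> * \<theta>)\<^sup>2) ^ m)) integrable_on {0..a}"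
      using hi by blast
    show "sin x * vol_E m (sqrt (\<rho>\<^sup>2 - (\<gamma> * x)\<^sup>2)) \<le> c * (x * sqrt (\<rho>\<^sup>2 - (\<gamma> * x)\<^sup>2) ^ m)"
      if "x \<in> {0..a}" for x
    proof -
      have "sin x \<le> x" using that by (intro sin_x_le_x) auto
      moreover have "0 \<le> c * sqrt (\<rho>\<^sup>2 - (\<gamma> * x)\<^sup>2) ^ m"
      proof -
        have "\<gamma> * x \<le> \<gamma> * a" using that g by (intro mult_left_mono) auto
        also have "\<dots> \<le> \<rho>" using a0 g by (simp add: field_simps)
        finally have "(\<gamma> * x)\<^sup>2 \<le> \<rho>\<^sup>2" using that g by (intro power_mono) auto
        then show ?thesis using c0 by simp
      qed
      ultimately have "sin x * (c * sqrt (\<rho>\<^sup>2 - (\<gamma> * x)\<^sup>2) ^ m) \<le> x * (c * sqrt (\<rho>\<^sup>2 - (\<gamma> * x)\<^sup>2) ^ m)"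
        by (rule mult_right_mono)
      then show ?thesis unfolding vol_E_def c_def by (simp add: mult_ac)
    qed
  qed
  also have "\<dots> = c * I" using hi by (rule integral_unique)
  also have "\<dots> \<le> c * (\<rho> ^ (m+2) / ((real m + 2) * \<gamma>\<^sup>2))"
  proof (rule mult_left_mono[OF _ c0])
    have "sqrt (\<rho>\<^sup>2 - (\<gamma> * 0)\<^sup>2) = \<rho>" using r by simp
    then have "I = (\<rho> ^ (m+2) - sqrt (\<rho>\<^sup>2 - (\<gamma> * a)\<^sup>2) ^ (m+2)) / ((real m + 2) * \<gamma>\<^sup>2)"
    proof -
      have gen: "(X - Y) / (- D) = (Y - X) / (D::real)" for X Y D
        by (metis divide_minus_right minus_diff_eq minus_divide_left)
      show ?thesis unfolding I_def mult_minus_left gen \<open>sqrt (\<rho>\<^sup>2 - (\<gamma> * 0)\<^sup>2) = \<rho>\<close> ..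
    qed
    moreover have "sqrt (\<rho>\<^sup>2 - (\<gamma> * a)\<^sup>2) ^ (m+2) \<ge> 0" using ga by simp
    ultimately show "I \<le> \<rho> ^ (m+2) / ((real m + 2) * \<gamma>\<^sup>2)"
      using g by (simp add: divide_right_mono)
  qed
  finally have "2 * pi * \<gamma>\<^sup>2 * integral {0..a} (\<lambda>\<theta>. sin \<theta> * vol_E m (sqrt (\<rho>\<^sup>2 - (\<gamma> * \<theta>)\<^sup>2)))
     \<le> 2 * pi * \<gamma>\<^sup>2 * (c * (\<rho> ^ (m+2) / ((real m + 2) * \<gamma>\<^sup>2)))"
    by (intro mult_left_mono) auto
  also have "\<dots> = 2 * pi * c * \<rho> ^ (m+2) / (real m + 2)"
  proof -
    have d: "0 < real m * \<gamma>\<^sup>2 + 2 * \<gamma>\<^sup>2" using g by (intro add_nonneg_pos) auto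
    have d2: "0 < real m + 2" by simp
    show ?thesis using g d d2 by (simp add: field_simps)
  qed
  finally show ?thesis unfolding vol_SE_def m_def[symmetric] a_def[symmetric] c_def by simp
qed

lemma vol_SE_le_E:
  assumes "\<gamma> > 0" "\<rho> > 0" "n \<ge> 2"
  shows "vol_SE n \<gamma> \<rho> \<le> vol_E n \<rho>"
proof -
  have e: "n - 2 + 2 = n" "real (n - 2) + 2 = real n" using assms by auto
  have "vol_E n \<rho> = unit_ball_vol (real (n-2) + 2) * \<rho> ^ (n-2+2)" unfolding vol_E_def e ..
  also have "\<dots> = 2 * pi * unit_ball_vol (real (n - 2)) * \<rho> ^ (n - 2 + 2) / (real (n - 2) + 2)"
    unfolding ubv_rec by simp
  finally show ?thesis using vol_SE_le[OF assms(1,2), of n] by simp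
qed

lemma vol_SE_le_small:
  assumes "\<gamma> > 0" "\<rho> > 0" "n < 2"
  shows "vol_SE n \<gamma> \<rho> \<le> pi * \<rho>\<^sup>2"
proof -
  have e: "n - 2 = 0" using assms by auto
  have u: "unit_ball_vol 0 = 1" by (simp add: unit_ball_vol_def)
  show ?thesis using vol_SE_le[OF assms(1,2), of n] unfolding e by (simp add: u power2_eq_square)
qed

lemma ball_bound:
  fixes \<mu> :: "'a::metric_space measure"
  assumes sc: "Sc_vol_ge n \<mu> \<kappa> rX" and k: "\<kappa> \<ge> 0" and r: "0 < \<rho>" "\<rho> \<le> rX"
  shows "emeasure \<mu> (cball x \<rho>) \<le> ennreal (if \<kappa> = 0 \<or> 2 \<le> n then vol_E n \<rho> else pi * \<rho>\<^sup>2)"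
proof (cases "\<kappa> = 0")
  case True
  then show ?thesis using sc r unfolding Sc_vol_ge_def by auto
next
  case False
  then obtain rg where rg: "\<forall>\<gamma>. \<gamma> > sqrt (2 / \<kappa>) \<longrightarrow> rg \<gamma> > 0 \<and>
              (\<forall>x \<epsilon>. 0 < \<epsilon> \<and> \<epsilon> \<le> rg \<gamma> \<longrightarrow>
                  emeasure \<mu> (cball x \<epsilon>) < ennreal (vol_SE n \<gamma> \<epsilon>))"
     and rX: "rX = (INF \<gamma> \<in> {sqrt (2 / \<kappa>)<..}. rg \<gamma>)"
    using sc unfolding Sc_vol_ge_def by auto
  define \<gamma> where "\<gamma> = sqrt (2 / \<kappa>) + 1"
  have g1: "\<gamma> > sqrt (2 / \<kappa>)" unfolding \<gamma>_def by simp
  have g0: "\<gamma> > 0" unfolding \<gamma>_def using k by (simp add: add_nonneg_pos)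
  have "rX \<le> rg \<gamma>" unfolding rX
  proof (rule cINF_lower)
    show "bdd_below (rg ` {sqrt (2 / \<kappa>)<..})"
      by (rule bdd_belowI[of _ 0]) (use rg in force)
  qed (use g1 in auto)
  then have "emeasure \<mu> (cball x \<rho>) < ennreal (vol_SE n \<gamma> \<rho>)" using rg g1 r by auto
  moreover have "vol_SE n \<gamma> \<rho> \<le> (if \<kappa> = 0 \<or> 2 \<le> n then vol_E n \<rho> else pi * \<rho>\<^sup>2)"
    using vol_SE_le_E[OF g0 r(1)] vol_SE_le_small[OF g0 r(1)] False by auto
  ultimately show ?thesis by (meson ennreal_leI less_imp_le order_trans)
qed

lemma step:
  fixes \<mu> :: "'a::metric_space measure" and f :: "'a \<Rightarrow> 'b::metric_space"
  assumes sM: "sets \<mu> = sets borel"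
    and bound: "\<forall>x \<rho>. 0 < \<rho> \<and> \<rho> \<le> rX \<longrightarrow> emeasure \<mu> (cball x \<rho>) \<le> ennreal (B \<rho>)"
    and lam: "lam > 0"
    and fm: "f \<in> measurable (restrict_space borel (cball p R)) borel"
    and di: "\<forall>x\<in>cball p R. \<forall>y\<in>cball p R. \<bar>dist (f x) (f y) - lam * dist x y\<bar> \<le> e"
    and x0: "x0 \<in> cball p R" "dist (f x0) y \<le> e"
    and ed: "e \<le> \<delta> / 2" and pos: "0 < \<epsilon>" "0 < \<delta>" and rr: "(\<epsilon> + \<delta>) / lam \<le> rX"
  shows "emeasure (distr (restrict_space (scale_measure (ennreal (lam ^ n)) \<mu>) (cball p R)) borel f) (cball y \<epsilon>)
     \<le> ennreal (lam ^ n) * ennreal (B ((\<epsilon> + \<delta>) / lam))"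
proof -
  define D where "D = cball p R"
  define M where "M = scale_measure (ennreal (lam ^ n)) \<mu>"
  have sM': "sets M = sets borel" unfolding M_def using sM by simp
  have spM: "space M = UNIV" using sets_eq_imp_space_eq[OF sM'] by simp
  have fm': "f \<in> measurable (restrict_space M D) borel"
    using fm unfolding D_def
    by (subst measurable_cong_sets[OF sets_restrict_space_cong[OF sM'] refl]) simp
  have spR: "space (restrict_space M D) = D" using spM by (simp add: space_restrict_space)
  have "emeasure (distr (restrict_space M D) borel f) (cball y \<epsilon>) = emeasure (restrict_space M D) (f -` cball y \<epsilon> \<inter> D)"
    using emeasure_distr[OF fm', of "cball y \<epsilon>"] spR by simp
  also have "\<dots> = emeasure M (f -` cball y \<epsilon> \<inter> D)"
    by (rule emeasure_restrict_space) (auto simp: spM sM' D_def)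
  also have "\<dots> \<le> emeasure M (cball x0 ((\<epsilon> + \<delta>) / lam))"
  proof (rule emeasure_mono)
    show "cball x0 ((\<epsilon> + \<delta>) / lam) \<in> sets M" using sM' by simp
    show "f -` cball y \<epsilon> \<inter> D \<subseteq> cball x0 ((\<epsilon> + \<delta>) / lam)"
    proof
      fix x assume x: "x \<in> f -` cball y \<epsilon> \<inter> D"
      then have "lam * dist x x0 \<le> dist (f x) (f x0) + e" using di x0 unfolding D_def by force
      also have "\<dots> \<le> dist (f x) y + dist y (f x0) + e" using dist_triangle[of "f x" "f x0" y] by simp
      also have "\<dots> \<le> \<epsilon> + \<delta>" using x x0 ed by (simp add: dist_commute)
      finally have "dist x0 x \<le> (\<epsilon> + \<delta>) / lam" using lam by (simp add: field_simps dist_commute)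
      then show "x \<in> cball x0 ((\<epsilon> + \<delta>) / lam)" by simp
    qed
  qed
  also have "\<dots> = ennreal (lam ^ n) * emeasure \<mu> (cball x0 ((\<epsilon> + \<delta>) / lam))"
    unfolding M_def by simp
  also have "\<dots> \<le> ennreal (lam ^ n) * ennreal (B ((\<epsilon> + \<delta>) / lam))"
    by (rule mult_left_mono) (use bound rr pos lam in auto)
  finally show ?thesis unfolding M_def D_def .
qed

lemma arith_main:
  assumes lam: "lam \<ge> 1" and pos: "0 < \<epsilon>" "0 < \<delta>"
    and big: "lam \<ge> pi * (\<epsilon> + \<delta>)\<^sup>2 / vol_E n (\<epsilon> + \<delta>)"
  shows "lam ^ n * (if \<kappa> = 0 \<or> 2 \<le> n then vol_E n ((\<epsilon> + \<delta>) / lam) else pi * ((\<epsilon> + \<delta>) / lam)\<^sup>2)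
     \<le> vol_E n (\<epsilon> + \<delta>)"
proof (cases "\<kappa> = 0 \<or> 2 \<le> n")
  case True
  have "lam ^ n * vol_E n ((\<epsilon> + \<delta>) / lam) = vol_E n (\<epsilon> + \<delta>)"
    using lam unfolding vol_E_def by (simp add: power_divide)
  then show ?thesis using True by simp
next
  case False
  have c: "vol_E n (\<epsilon> + \<delta>) > 0" unfolding vol_E_def using pos by simp
  have "lam ^ n \<le> lam ^ 1" using False lam by (intro power_increasing) auto
  then have "lam ^ n * (pi * ((\<epsilon> + \<delta>) / lam)\<^sup>2) \<le> lam * (pi * ((\<epsilon> + \<delta>) / lam)\<^sup>2)"
    by (intro mult_right_mono) auto
  also have "\<dots> = pi * (\<epsilon> + \<delta>)\<^sup>2 / lam" using lam by (simp add: power2_eq_square field_simps)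
  also have "\<dots> \<le> vol_E n (\<epsilon> + \<delta>)" using big c lam by (simp add: field_simps)
  finally show ?thesis using False by simp
qed

theorem corollary3p7:
  fixes n :: nat and \<mu> :: "'a::metric_space measure" and \<kappa> rX :: real
    and p :: 'a and \<mu>Y :: "'b::metric_space measure" and q :: 'b
  assumes "mm_space \<mu>"
    and "compact (UNIV :: 'a set)"
    and "n_dimensional n \<mu>"
    and "\<kappa> \<ge> 0"
    and "Sc_vol_ge n \<mu> \<kappa> rX"
    and "tangent_space_at n \<mu> p \<mu>Y q"
  shows "\<forall>y \<epsilon>. 0 < \<epsilon> \<and> \<epsilon> \<le> rX \<longrightarrow> emeasure \<mu>Y (cball y \<epsilon>) \<le> ennreal (vol_E n \<epsilon>)"
proof (intro allI impI)
  fix y \<epsilon> assume ye: "0 < \<epsilon> \<and> \<epsilon> \<le> rX"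
  have sM: "sets \<mu> = sets borel" using assms(1) unfolding mm_space_def by auto
  define B where "B = (\<lambda>\<rho>. if \<kappa> = 0 \<or> 2 \<le> n then vol_E n \<rho> else pi * \<rho>\<^sup>2)"
  have bound: "\<forall>x \<rho>. 0 < \<rho> \<and> \<rho> \<le> rX \<longrightarrow> emeasure \<mu> (cball x \<rho>) \<le> ennreal (B \<rho>)"
    unfolding B_def using ball_bound[OF assms(5,4)] by blast
  obtain lam r e f where lam: "filterlim lam at_top sequentially" "\<forall>i. lam i > 0"
    and r: "filterlim r at_top sequentially" and e: "e \<longlonglongrightarrow> 0"
    and F: "\<forall>i. let D = cball p (r i / lam i) in
               f i \<in> measurable (restrict_space borel D) borel \<and>
               f i p = q \<and>
               f i ` D \<subseteq> cball q (r i) \<and>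
               (\<forall>x\<in>D. \<forall>y\<in>D. \<bar>dist (f i x) (f i y) - lam i * dist x y\<bar> \<le> e i) \<and>
               (\<forall>z\<in>cball q (r i). \<exists>x\<in>D. dist (f i x) z \<le> e i)"
    and conv: "\<forall>A \<in> sets borel.
             (\<lambda>i. emeasure (distr (restrict_space (scale_measure (ennreal (lam i ^ n)) \<mu>)
                                    (cball p (r i / lam i))) borel (f i)) A)
             \<longlonglongrightarrow> emeasure \<mu>Y A"
  proof -
    have "\<exists>lam :: nat \<Rightarrow> real. filterlim lam at_top sequentially \<and> (\<forall>i. lam i > 0) \<and>
       (\<exists>(r :: nat \<Rightarrow> real) (e :: nat \<Rightarrow> real) (f :: nat \<Rightarrow> 'a \<Rightarrow> 'b).
          filterlim r at_top sequentially \<and> e \<longlonglongrightarrow> 0 \<and>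
          (\<forall>i. let D = cball p (r i / lam i) in
               f i \<in> measurable (restrict_space borel D) borel \<and>
               f i p = q \<and>
               f i ` D \<subseteq> cball q (r i) \<and>
               (\<forall>x\<in>D. \<forall>y\<in>D. \<bar>dist (f i x) (f i y) - lam i * dist x y\<bar> \<le> e i) \<and>
               (\<forall>z\<in>cball q (r i). \<exists>x\<in>D. dist (f i x) z \<le> e i)) \<and>
          (\<forall>A \<in> sets borel.
             (\<lambda>i. emeasure (distr (restrict_space (scale_measure (ennreal (lam i ^ n)) \<mu>)
                                    (cball p (r i / lam i))) borel (f i)) A)
             \<longlonglongrightarrow> emeasure \<mu>Y A))"
      using assms(6) unfolding tangent_space_at_def by (rule conjunct2[OF conjunct2])
    then show ?thesis by (elim exE conjE) (rule that)
  qed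
  have key: "emeasure \<mu>Y (cball y \<epsilon>) \<le> ennreal (vol_E n (\<epsilon> + \<delta>))" if d: "\<delta> > 0" for \<delta>
  proof (rule tendsto_upperbound)
    show "(\<lambda>i. emeasure (distr (restrict_space (scale_measure (ennreal (lam i ^ n)) \<mu>)
                                    (cball p (r i / lam i))) borel (f i)) (cball y \<epsilon>))
             \<longlonglongrightarrow> emeasure \<mu>Y (cball y \<epsilon>)" using conv by simp
    show "sequentially \<noteq> bot" by simp
    have ev1: "\<forall>\<^sub>F i in sequentially. dist q y \<le> r i" using r by (simp add: filterlim_at_top)
    have ev2: "\<forall>\<^sub>F i in sequentially. e i < \<delta> / 2" by (rule order_tendstoD(2)[OF e]) (use d in simp)
    have ev3: "\<forall>\<^sub>F i in sequentially. max 1 (max ((\<epsilon> + \<delta>) / rX) (pi * (\<epsilon> + \<delta>)\<^sup>2 / vol_E n (\<epsilon> + \<delta>))) \<le> lam i"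
      using lam(1) unfolding filterlim_at_top by blast
    show "\<forall>\<^sub>F i in sequentially. emeasure (distr (restrict_space (scale_measure (ennreal (lam i ^ n)) \<mu>)
                                    (cball p (r i / lam i))) borel (f i)) (cball y \<epsilon>) \<le> ennreal (vol_E n (\<epsilon> + \<delta>))"
      using ev1 ev2 ev3
    proof eventually_elim
      case (elim i)
      have l0: "lam i > 0" using lam(2) by simp
      have Fi: "f i \<in> measurable (restrict_space borel (cball p (r i / lam i))) borel"
        "\<forall>x\<in>cball p (r i / lam i). \<forall>y\<in>cball p (r i / lam i). \<bar>dist (f i x) (f i y) - lam i * dist x y\<bar> \<le> e i"
        "\<forall>z\<in>cball q (r i). \<exists>x\<in>cball p (r i / lam i). dist (f i x) z \<le> e i"
        using F[rule_format, of i] unfolding Let_def by blast+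
      obtain x0 where x0: "x0 \<in> cball p (r i / lam i)" "dist (f i x0) y \<le> e i"
        using bspec[OF Fi(3), of y] elim(1) by auto
      have rX0: "rX > 0" using ye by linarith
      have rr: "(\<epsilon> + \<delta>) / lam i \<le> rX"
        using elim(3) rX0 l0 by (simp add: field_simps)
      have "emeasure (distr (restrict_space (scale_measure (ennreal (lam i ^ n)) \<mu>)
                                    (cball p (r i / lam i))) borel (f i)) (cball y \<epsilon>)
         \<le> ennreal (lam i ^ n) * ennreal (B ((\<epsilon> + \<delta>) / lam i))"
        by (rule step[OF sM bound l0 Fi(1) Fi(2) x0]) (use elim ye d rr in auto)
      also have "\<dots> = ennreal (lam i ^ n * B ((\<epsilon> + \<delta>) / lam i))"
        by (rule ennreal_mult'[symmetric]) (use l0 in simp)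
      also have "\<dots> \<le> ennreal (vol_E n (\<epsilon> + \<delta>))"
        unfolding B_def by (rule ennreal_leI, rule arith_main) (use elim ye d in auto)
      finally show ?case .
    qed
  qed
  show "emeasure \<mu>Y (cball y \<epsilon>) \<le> ennreal (vol_E n \<epsilon>)"
  proof (rule tendsto_lowerbound)
    show "((\<lambda>\<delta>. ennreal (vol_E n (\<epsilon> + \<delta>))) \<longlongrightarrow> ennreal (vol_E n \<epsilon>)) (at_right 0)"
      unfolding vol_E_def
      by (intro tendsto_ennrealI tendsto_intros) (auto intro!: tendsto_eq_intros)
    show "\<forall>\<^sub>F \<delta> in at_right 0. emeasure \<mu>Y (cball y \<epsilon>) \<le> ennreal (vol_E n (\<epsilon> + \<delta>))"
      using key by (simp add: eventually_at_right_less eventually_mono[OF eventually_at_right_less])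
    show "at_right (0::real) \<noteq> bot" by simp
  qed
qed

end
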